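(* Let $m\ge 2$, let $A$ be a real diagonal $n\times n$ matrix with $\|A\|=1$, and let $A_2,\dots,A_m$ be real symmetric $n\times n$ matrices such that $\langle A_\alpha,A_\beta\rangle=0$ for $\alpha\neq\beta$ and $\|A_2\|\geq\cdots\geq\|A_m\|$. Then \[ \sum_{\alpha=2}^m\|[A,A_\alpha]\|^2\leq \sum_{\alpha=2}^m\|A_\alpha\|^2+\|A_2\|^2 . \]
   Context: $\langle A,B\rangle=\sum_{i,j}a_{ij}b_{ij}$ is the Frobenius inner product, $\|A\|^2=\langle A,A\rangle$, and $[A,B]=AB-BA$. *)

theory Defs
  imports "HOL-Analysis.Analysis"
begin

definition frob_inner :: "real^'n::finite^'n \<Rightarrow> real^'n^'n \<Rightarrow> real" where
  "frob_inner A B = (\<Sum>i\<in>UNIV. \<Sum>j\<in>UNIV. A$i$j * B$i$j)"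

definition frob_norm :: "real^'n::finite^'n \<Rightarrow> real" where
  "frob_norm A = sqrt (frob_inner A A)"

definition commutator :: "real^'n::finite^'n \<Rightarrow> real^'n^'n \<Rightarrow> real^'n^'n" where
  "commutator A B = A ** B - B ** A"

definition is_diagonal :: "real^'n::finite^'n \<Rightarrow> bool" where
  "is_diagonal A \<longleftrightarrow> (\<forall>i j. i \<noteq> j \<longrightarrow> A$i$j = 0)"

definition is_symmetric :: "real^'n::finite^'n \<Rightarrow> bool" where
  "is_symmetric A \<longleftrightarrow> transpose A = A"

end

theory Submission
  imports Defs
begin


lemma orth_sum_sq:
  fixes B :: "nat \<Rightarrow> 'a::real_inner"
  assumes "finite I" and orth: "\<And>a b. a \<in> I \<Longrightarrow> b \<in> I \<Longrightarrow> a \<noteq> b \<Longrightarrow> inner (B a) (B b) = 0"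
  shows "inner (\<Sum>a\<in>I. l a *\<^sub>R B a) (\<Sum>a\<in>I. l a *\<^sub>R B a) = (\<Sum>a\<in>I. (l a)^2 * inner (B a) (B a))"
proof -
  have "inner (\<Sum>a\<in>I. l a *\<^sub>R B a) (\<Sum>a\<in>I. l a *\<^sub>R B a) = (\<Sum>a\<in>I. \<Sum>b\<in>I. l a * l b * inner (B b) (B a))"
    by (simp add: inner_sum_left inner_sum_right sum_distrib_left mult_ac)
  also have "\<dots> = (\<Sum>a\<in>I. (l a)^2 * inner (B a) (B a))"
  proof (rule sum.cong[OF refl])
    fix a assume a: "a \<in> I"
    show "(\<Sum>b\<in>I. l a * l b * inner (B b) (B a)) = (l a)^2 * inner (B a) (B a)"
      using assms a by (simp add: sum.remove power2_eq_square)
  qed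
  finally show ?thesis .
qed

lemma bessel:
  fixes B :: "nat \<Rightarrow> 'a::real_inner"
  assumes "finite I" and orth: "\<And>a b. a \<in> I \<Longrightarrow> b \<in> I \<Longrightarrow> a \<noteq> b \<Longrightarrow> inner (B a) (B b) = 0"
    and nb: "\<And>a. a \<in> I \<Longrightarrow> norm (B a) \<le> t"
  shows "(\<Sum>a\<in>I. (inner X (B a))^2) \<le> t^2 * inner X X"
proof (cases "t > 0")
  case False
  then have "\<And>a. a \<in> I \<Longrightarrow> B a = 0" using nb by (metis norm_ge_zero order.trans norm_le_zero_iff not_less)
  then show ?thesis by simp
next
  case True
  define s where "s a = inner X (B a)" for a
  define l where "l a = s a / t^2" for a
  define Y where "Y = (\<Sum>a\<in>I. l a *\<^sub>R B a)"
  have YY: "inner Y Y = (\<Sum>a\<in>I. (l a)^2 * inner (B a) (B a))"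
    unfolding Y_def by (rule orth_sum_sq[OF assms(1) orth])
  have "inner Y Y \<le> (\<Sum>a\<in>I. (l a)^2 * t^2)"
    unfolding YY
  proof (rule sum_mono)
    fix a assume "a \<in> I"
    then have "inner (B a) (B a) \<le> t^2" using nb[of a]
      by (metis norm_ge_zero power_mono power2_norm_eq_inner)
    then show "(l a)^2 * inner (B a) (B a) \<le> (l a)^2 * t^2" by (simp add: mult_left_mono)
  qed
  also have "\<dots> = (\<Sum>a\<in>I. (s a)^2) / t^2"
    using True by (simp add: l_def sum_divide_distrib power_divide power2_eq_square)
  finally have Y1: "inner Y Y \<le> (\<Sum>a\<in>I. (s a)^2) / t^2" .
  have XY: "inner X Y = (\<Sum>a\<in>I. (s a)^2) / t^2"
    by (simp add: Y_def inner_sum_right l_def s_def sum_divide_distrib power2_eq_square)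
  have "0 \<le> inner (X - Y) (X - Y)" by simp
  also have "\<dots> = inner X X - 2 * inner X Y + inner Y Y"
    by (simp add: inner_diff_left inner_diff_right inner_commute)
  finally have "0 \<le> inner X X - (\<Sum>a\<in>I. (s a)^2) / t^2"
    using XY Y1 by linarith
  then have "(\<Sum>a\<in>I. (s a)^2) / t^2 \<le> inner X X" by simp
  then show ?thesis using True by (simp add: s_def divide_le_eq mult.commute)
qed



lemma sub_sq_le:
  fixes a :: "'n::finite \<Rightarrow> real"
  assumes "(\<Sum>i\<in>UNIV. (a i)^2) = 1"
  shows "(\<Sum>i\<in>S. (a i)^2) \<le> 1"
  using assms sum_mono2[of UNIV S "\<lambda>i. (a i)^2"] by simp

lemma bad_facts:
  fixes a :: "'n::finite \<Rightarrow> real"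
  assumes sq: "(\<Sum>i\<in>UNIV. (a i)^2) = 1" and bad: "(a i - a j)^2 > 1"
  shows "i \<noteq> j" "a i * a j < 0"
proof -
  show ij: "i \<noteq> j" using bad by auto
  have "(\<Sum>k\<in>{i,j}. (a k)^2) \<le> 1" by (rule sub_sq_le[OF sq])
  then have "(a i)^2 + (a j)^2 \<le> 1" using ij by simp
  then show "a i * a j < 0" using bad by (simp add: power2_diff)
qed

lemma disjoint_bad:
  fixes a :: "'n::finite \<Rightarrow> real"
  assumes sq: "(\<Sum>i\<in>UNIV. (a i)^2) = 1" and b1: "(a i - a j)^2 > 1" and b2: "(a k - a l)^2 > 1"
    and "k \<noteq> i" "k \<noteq> j" "l \<noteq> i" "l \<noteq> j"
  shows False
proof -
  have "i \<noteq> j" "k \<noteq> l" using bad_facts[OF sq b1] bad_facts[OF sq b2] by auto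
  have "(\<Sum>x\<in>{i,j,k,l}. (a x)^2) \<le> 1" by (rule sub_sq_le[OF sq])
  then have "(a i)^2 + (a j)^2 + (a k)^2 + (a l)^2 \<le> 1" using assms \<open>i \<noteq> j\<close> \<open>k \<noteq> l\<close> by simp
  moreover have "(a i - a j)^2 \<le> 2 * ((a i)^2 + (a j)^2)" "(a k - a l)^2 \<le> 2 * ((a k)^2 + (a l)^2)"
  proof -
    have "0 \<le> (a i + a j)^2" "0 \<le> (a k + a l)^2" by simp_all
    then show "(a i - a j)^2 \<le> 2 * ((a i)^2 + (a j)^2)" "(a k - a l)^2 \<le> 2 * ((a k)^2 + (a l)^2)"
      by (simp_all add: power2_diff power2_sum)
  qed
  ultimately show False using b1 b2 by argo
qed

lemma star_bound:
  fixes a :: "'n::finite \<Rightarrow> real"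
  assumes sq: "(\<Sum>i\<in>UNIV. (a i)^2) = 1"
  shows "(\<Sum>j\<in>UNIV. max 0 ((a c - a j)^2 - 1)) \<le> 1"
proof -
  define J where "J = {j. (a c - a j)^2 > 1}"
  define x where "x = \<bar>a c\<bar>"
  define k where "k = real (card J)"
  define S where "S = (\<Sum>j\<in>J. \<bar>a j\<bar>)"
  define Q where "Q = (\<Sum>j\<in>J. (a j)^2)"
  have cJ: "c \<notin> J" by (simp add: J_def)
  have "(\<Sum>j\<in>UNIV. max 0 ((a c - a j)^2 - 1)) = (\<Sum>j\<in>J. max 0 ((a c - a j)^2 - 1))"
    by (rule sum.mono_neutral_right) (auto simp: J_def)
  also have "\<dots> \<le> (\<Sum>j\<in>J. (x + \<bar>a j\<bar>)^2 - 1)"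
  proof (rule sum_mono)
    fix j assume "j \<in> J"
    have "(a c - a j)^2 \<le> (x + \<bar>a j\<bar>)^2"
    proof -
      have "\<bar>a c - a j\<bar> \<le> x + \<bar>a j\<bar>" unfolding x_def by (rule abs_triangle_ineq4)
      then have "\<bar>a c - a j\<bar>^2 \<le> (x + \<bar>a j\<bar>)^2" by (rule power_mono) simp
      then show ?thesis by simp
    qed
    then show "max 0 ((a c - a j)^2 - 1) \<le> (x + \<bar>a j\<bar>)^2 - 1" using \<open>j \<in> J\<close> by (simp add: J_def)
  qed
  also have "\<dots> = k * x^2 + 2 * x * S + Q - k"
    by (simp add: power2_sum sum.distrib sum_subtractf k_def S_def Q_def sum_distrib_left)
  also have "\<dots> \<le> 1"
  proof -
    have "S^2 \<le> k * Q"
      using Cauchy_Schwarz_ineq_sum[of "\<lambda>_. 1::real" "\<lambda>j. \<bar>a j\<bar>" J] by (simp add: S_def k_def Q_def)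
    moreover have "2 * x * S \<le> x^2 + S^2" proof -
      have "0 \<le> (x - S)^2" by simp
      then show ?thesis by (simp add: power2_diff)
    qed
    moreover have "x^2 + Q \<le> 1"
    proof -
      have "(\<Sum>j\<in>insert c J. (a j)^2) \<le> 1" by (rule sub_sq_le[OF sq])
      then show ?thesis using cJ by (simp add: x_def Q_def)
    qed
    moreover have "k \<ge> 0" by (simp add: k_def)
    ultimately have "(k+1) * (x^2 + Q) \<le> (k+1) * 1" by (intro mult_left_mono) auto
    then show ?thesis using \<open>S^2 \<le> k * Q\<close> \<open>2 * x * S \<le> x^2 + S^2\<close> by (simp add: algebra_simps)
  qed
  finally show ?thesis .
qed



lemma sign3: fixes x y z :: real assumes "x*y < 0" "x*z < 0" "y*z < 0" shows False
proof -
  have "0 < (x*y)*(x*z)" using assms by (intro mult_neg_neg)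
  then have "0 < x^2 * (y*z)" by (simp add: algebra_simps power2_eq_square)
  then show False using assms(3) by (auto simp: zero_less_mult_iff mult_less_0_iff)
qed

lemma center_sum:
  fixes d :: "'n::finite \<Rightarrow> 'n \<Rightarrow> real"
  assumes sym: "\<And>i j. d i j = d j i" and nn: "\<And>i j. d i j \<ge> 0"
    and cen: "\<And>i j. d i j \<noteq> 0 \<Longrightarrow> i = c \<or> j = c"
  shows "(\<Sum>i\<in>UNIV. \<Sum>j\<in>UNIV. d i j) \<le> 2 * (\<Sum>j\<in>UNIV. d c j)"
proof -
  have row: "(\<Sum>j\<in>UNIV. d i j) = d i c" if "i \<noteq> c" for i
  proof -
    have "(\<Sum>j\<in>UNIV. d i j) = (\<Sum>j\<in>UNIV. if j = c then d i c else 0)"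
      by (rule sum.cong) (use cen that in auto)
    then show ?thesis by simp
  qed
  have "(\<Sum>i\<in>UNIV. \<Sum>j\<in>UNIV. d i j) = (\<Sum>j\<in>UNIV. d c j) + (\<Sum>i\<in>UNIV-{c}. \<Sum>j\<in>UNIV. d i j)"
    by (simp add: sum.remove)
  also have "(\<Sum>i\<in>UNIV-{c}. \<Sum>j\<in>UNIV. d i j) = (\<Sum>i\<in>UNIV-{c}. d c i)"
    by (rule sum.cong) (auto simp: row sym)
  also have "\<dots> \<le> (\<Sum>i\<in>UNIV. d c i)"
    by (rule sum_mono2) (auto simp: nn)
  finally show ?thesis by simp
qed

lemma sumswap3:
  fixes f :: "nat \<Rightarrow> 'n::finite \<Rightarrow> 'n \<Rightarrow> real"
  shows "(\<Sum>a\<in>I. \<Sum>i\<in>UNIV. \<Sum>j\<in>UNIV. f a i j) = (\<Sum>i\<in>UNIV. \<Sum>j\<in>UNIV. \<Sum>a\<in>I. f a i j)"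
  by (subst sum.swap) (simp add: sum.swap[of _ I])

lemma frob_inner_eq: "frob_inner X Y = inner X Y"
  by (simp add: frob_inner_def inner_vec_def)

lemma frob_norm_eq: "frob_norm X = norm X"
  by (simp add: frob_norm_def frob_inner_eq norm_eq_sqrt_inner)

lemma frob_norm_sq: "(frob_norm X)^2 = (\<Sum>i\<in>UNIV. \<Sum>j\<in>UNIV. (X$i$j)^2)"
proof -
  have "0 \<le> frob_inner X X" by (simp add: frob_inner_def sum_nonneg)
  then have "(frob_norm X)^2 = frob_inner X X" by (simp add: frob_norm_def)
  then show ?thesis by (simp add: frob_inner_def power2_eq_square)
qed

lemma diag_mult:
  fixes A B :: "real^'n::finite^'n"
  assumes "is_diagonal A"
  shows "(A ** B)$i$j = A$i$i * B$i$j" "(B ** A)$i$j = B$i$j * A$j$j"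
proof -
  have "(\<Sum>k\<in>UNIV. A$i$k * B$k$j) = (\<Sum>k\<in>UNIV. if k = i then A$i$i * B$i$j else 0)"
    by (rule sum.cong) (use assms in \<open>auto simp: is_diagonal_def\<close>)
  then show "(A ** B)$i$j = A$i$i * B$i$j" by (simp add: matrix_matrix_mult_def)
  have "(\<Sum>k\<in>UNIV. B$i$k * A$k$j) = (\<Sum>k\<in>UNIV. if k = j then B$i$j * A$j$j else 0)"
    by (rule sum.cong) (use assms in \<open>auto simp: is_diagonal_def\<close>)
  then show "(B ** A)$i$j = B$i$j * A$j$j" by (simp add: matrix_matrix_mult_def)
qed

lemma comm_sq:
  fixes A B :: "real^'n::finite^'n"
  assumes "is_diagonal A"
  shows "(frob_norm (commutator A B))^2 = (\<Sum>i\<in>UNIV. \<Sum>j\<in>UNIV. (A$i$i - A$j$j)^2 * (B$i$j)^2)"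
  unfolding frob_norm_sq commutator_def
proof (intro sum.cong refl)
  fix i j
  show "((A ** B - B ** A)$i$j)^2 = (A$i$i - A$j$j)^2 * (B$i$j)^2"
    using diag_mult[OF assms, of B i j] by (simp add: power2_eq_square algebra_simps)
qed


lemma dsum2: "(\<Sum>x\<in>(UNIV::'n::finite set). \<Sum>y\<in>(UNIV::'n set). if x = p \<and> y = q then c else 0) = (c::real)"
proof -
  have "(\<Sum>y\<in>(UNIV::'n set). if x = p \<and> y = q then c else 0) = (if x = p then c else 0)" for x
    by (cases "x = p") simp_all
  then show ?thesis by simp
qed

lemma total_bound:
  fixes a :: "'n::finite \<Rightarrow> real"
  assumes sq: "(\<Sum>i\<in>UNIV. (a i)^2) = 1"
  shows "(\<Sum>i\<in>UNIV. \<Sum>j\<in>UNIV. max 0 ((a i - a j)^2 - 1)) \<le> 2"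
proof -
  define d where "d i j = max 0 ((a i - a j)^2 - 1)" for i j
  have sym: "d i j = d j i" for i j by (simp add: d_def power2_commute)
  have nn: "d i j \<ge> 0" for i j by (simp add: d_def)
  have badI: "(a i - a j)^2 > 1" if "d i j \<noteq> 0" for i j using that by (simp add: d_def max_def split: if_splits)
  have "\<exists>c. \<forall>i j. d i j \<noteq> 0 \<longrightarrow> i = c \<or> j = c"
  proof (cases "\<forall>i j. d i j = 0")
    case True then show ?thesis by auto
  next
    case False
    then obtain p q where pq: "d p q \<noteq> 0" by auto
    have bpq: "(a p - a q)^2 > 1" using badI[OF pq] .
    have inter: "i = p \<or> i = q \<or> j = p \<or> j = q" if "d i j \<noteq> 0" for i j
      using disjoint_bad[OF sq bpq badI[OF that]] by blast
    show ?thesis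
    proof (cases "\<forall>r. r \<noteq> q \<longrightarrow> d p r = 0")
      case True
      show ?thesis
      proof (rule exI[of _ q], intro allI impI)
        fix i j assume ij: "d i j \<noteq> 0"
        show "i = q \<or> j = q"
          using inter[OF ij] True ij sym[of i j] by metis
      qed
    next
      case False
      then obtain r where r: "r \<noteq> q" "d p r \<noteq> 0" by auto
      have bpr: "(a p - a r)^2 > 1" using badI[OF r(2)] .
      show ?thesis
      proof (rule exI[of _ p], intro allI impI, rule ccontr)
        fix i j assume ij: "d i j \<noteq> 0" and np: "\<not> (i = p \<or> j = p)"
        then obtain s where s: "d q s \<noteq> 0" "s \<noteq> p"
          using inter[OF ij] sym[of i j] by metis
        have bqs: "(a q - a s)^2 > 1" using badI[OF s(1)] .
        have "p \<noteq> q" "p \<noteq> r" "q \<noteq> s" using bad_facts[OF sq bpq] bad_facts[OF sq bpr] bad_facts[OF sq bqs] by auto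
        then have "r = s" using disjoint_bad[OF sq bpr bqs] r(1) s(2) by blast
        then show False using bad_facts(2)[OF sq bpq] bad_facts(2)[OF sq bpr] bad_facts(2)[OF sq bqs]
          using sign3 by blast
      qed
    qed
  qed
  then obtain c where c: "\<And>i j. d i j \<noteq> 0 \<Longrightarrow> i = c \<or> j = c" by blast
  have "(\<Sum>i\<in>UNIV. \<Sum>j\<in>UNIV. d i j) \<le> 2 * (\<Sum>j\<in>UNIV. d c j)"
    by (rule center_sum[OF sym nn c])
  also have "\<dots> \<le> 2" using star_bound[OF sq, of c] by (simp add: d_def)
  finally show ?thesis by (simp add: d_def)
qed

theorem mainTheorem5:
  fixes m :: nat and A :: "real^'n::finite^'n" and B :: "nat \<Rightarrow> real^'n^'n"
  assumes "m \<ge> 2"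
    and "is_diagonal A"
    and "frob_norm A = 1"
    and "\<And>\<alpha>. \<alpha> \<in> {2..m} \<Longrightarrow> is_symmetric (B \<alpha>)"
    and "\<And>\<alpha> \<beta>. \<alpha> \<in> {2..m} \<Longrightarrow> \<beta> \<in> {2..m} \<Longrightarrow> \<alpha> \<noteq> \<beta> \<Longrightarrow> frob_inner (B \<alpha>) (B \<beta>) = 0"
    and "\<And>\<alpha> \<beta>. \<alpha> \<in> {2..m} \<Longrightarrow> \<beta> \<in> {2..m} \<Longrightarrow> \<alpha> \<le> \<beta> \<Longrightarrow> frob_norm (B \<beta>) \<le> frob_norm (B \<alpha>)"
  shows "(\<Sum>\<alpha>=2..m. (frob_norm (commutator A (B \<alpha>)))^2)
           \<le> (\<Sum>\<alpha>=2..m. (frob_norm (B \<alpha>))^2) + (frob_norm (B 2))^2"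
proof -
  define I where "I = {2..m}"
  define t where "t = frob_norm (B 2)"
  define a where "a i = A$i$i" for i
  define b where "b \<alpha> i j = B \<alpha> $i$j" for \<alpha> i j
  define d where "d i j = max 0 ((a i - a j)^2 - 1)" for i j
  have fI: "finite I" by (simp add: I_def)
  have sqA: "(\<Sum>i\<in>UNIV. (a i)^2) = 1"
  proof -
    have "(\<Sum>i\<in>UNIV. \<Sum>j\<in>UNIV. (A$i$j)^2) = 1" using assms(3) frob_norm_sq[of A] by simp
    moreover have "(\<Sum>j\<in>UNIV. (A$i$j)^2) = (a i)^2" for i
    proof -
      have "(\<Sum>j\<in>UNIV. (A$i$j)^2) = (\<Sum>j\<in>UNIV. if j = i then (a i)^2 else 0)"
        by (rule sum.cong) (use assms(2) in \<open>auto simp: is_diagonal_def a_def\<close>)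
      then show ?thesis by simp
    qed
    ultimately show ?thesis by simp
  qed
  have nb: "norm (B \<alpha>) \<le> t" if "\<alpha> \<in> I" for \<alpha>
    using assms(6)[of 2 \<alpha>] assms(1) that by (simp add: I_def t_def frob_norm_eq)
  have orth: "inner (B \<alpha>) (B \<beta>) = 0" if "\<alpha> \<in> I" "\<beta> \<in> I" "\<alpha> \<noteq> \<beta>" for \<alpha> \<beta>
    using assms(5)[of \<alpha> \<beta>] that by (simp add: I_def frob_inner_eq)
  have W: "(\<Sum>\<alpha>\<in>I. (b \<alpha> i j)^2) \<le> t^2 / 2" if ij: "i \<noteq> j" for i j
  proof -
    define X :: "real^'n^'n" where "X = (\<chi> k l. (if k = i \<and> l = j then 1 else 0) + (if k = j \<and> l = i then 1 else 0))"
    have XY: "inner X Y = Y$i$j + Y$j$i" for Y :: "real^'n^'n"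
      by (simp add: X_def inner_vec_def distrib_right sum.distrib if_distrib[of "\<lambda>x. x * _"] dsum2 cong: if_cong)
    have XX: "inner X X = 2" using XY[of X] ij by (simp add: X_def)
    have "(\<Sum>\<alpha>\<in>I. (inner X (B \<alpha>))^2) \<le> t^2 * inner X X"
      by (rule bessel[OF fI orth nb])
    moreover have "inner X (B \<alpha>) = 2 * b \<alpha> i j" if "\<alpha> \<in> I" for \<alpha>
    proof -
      have "transpose (B \<alpha>) = B \<alpha>" using assms(4) that by (simp add: I_def is_symmetric_def)
      then have "B \<alpha> $j$i = B \<alpha> $i$j" by (metis transpose_def vec_lambda_beta)
      then show ?thesis by (simp add: XY b_def)
    qed
    ultimately have "(\<Sum>\<alpha>\<in>I. (2 * b \<alpha> i j)^2) \<le> t^2 * 2" using XX by (simp cong: sum.cong)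
    then show ?thesis by (simp add: power_mult_distrib sum_distrib_left[symmetric])
  qed
  have lhs: "(\<Sum>\<alpha>\<in>I. (frob_norm (commutator A (B \<alpha>)))^2) = (\<Sum>\<alpha>\<in>I. \<Sum>i\<in>UNIV. \<Sum>j\<in>UNIV. (a i - a j)^2 * (b \<alpha> i j)^2)"
    by (simp add: comm_sq[OF assms(2)] a_def b_def)
  have rhs: "(\<Sum>\<alpha>\<in>I. (frob_norm (B \<alpha>))^2) = (\<Sum>\<alpha>\<in>I. \<Sum>i\<in>UNIV. \<Sum>j\<in>UNIV. (b \<alpha> i j)^2)"
    by (simp add: frob_norm_sq b_def)
  have "(\<Sum>\<alpha>\<in>I. \<Sum>i\<in>UNIV. \<Sum>j\<in>UNIV. (a i - a j)^2 * (b \<alpha> i j)^2)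
     \<le> (\<Sum>\<alpha>\<in>I. \<Sum>i\<in>UNIV. \<Sum>j\<in>UNIV. (1 + d i j) * (b \<alpha> i j)^2)"
    by (intro sum_mono mult_right_mono) (auto simp: d_def)
  also have "\<dots> = (\<Sum>\<alpha>\<in>I. \<Sum>i\<in>UNIV. \<Sum>j\<in>UNIV. (b \<alpha> i j)^2) + (\<Sum>\<alpha>\<in>I. \<Sum>i\<in>UNIV. \<Sum>j\<in>UNIV. d i j * (b \<alpha> i j)^2)"
    by (simp add: distrib_right sum.distrib)
  also have "(\<Sum>\<alpha>\<in>I. \<Sum>i\<in>UNIV. \<Sum>j\<in>UNIV. d i j * (b \<alpha> i j)^2) = (\<Sum>i\<in>UNIV. \<Sum>j\<in>UNIV. d i j * (\<Sum>\<alpha>\<in>I. (b \<alpha> i j)^2))"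
    by (simp add: sumswap3 sum_distrib_left)
  also have "\<dots> \<le> (\<Sum>i\<in>UNIV. \<Sum>j\<in>UNIV. d i j * (t^2 / 2))"
  proof (intro sum_mono)
    fix i j
    show "d i j * (\<Sum>\<alpha>\<in>I. (b \<alpha> i j)^2) \<le> d i j * (t^2 / 2)"
    proof (cases "i = j")
      case True then show ?thesis by (simp add: d_def)
    next
      case False then show ?thesis using W[OF False] by (intro mult_left_mono) (auto simp: d_def)
    qed
  qed
  also have "\<dots> = (t^2 / 2) * (\<Sum>i\<in>UNIV. \<Sum>j\<in>UNIV. d i j)"
    by (simp add: sum_distrib_left sum_distrib_right mult.commute)
  also have "\<dots> \<le> (t^2 / 2) * 2"
    using total_bound[OF sqA] by (intro mult_left_mono) (auto simp: d_def)
  finally show ?thesis using lhs rhs by (simp add: I_def t_def)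
qed

end
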